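(* Let $1<p<\infty$ and let $\mathcal{U}$ be a nonprincipal ultrafilter on $\mathbb{N}$. For every $(f_n)_{n,\mathcal{U}}\in(L^{p})^{\mathcal{U}}$ the norm limit $\lim_{r\to\infty}(f_nI(|f_n|>r))_{n,\mathcal{U}}$ exists in $(L^{p})^{\mathcal{U}}$ and depends only on the class $(f_n)_{n,\mathcal{U}}$, and the map $R:(L^{p})^{\mathcal{U}}\to(L^{p})^{\mathcal{U}}$, $R[(f_n)_{n,\mathcal{U}}]=\lim_{r\to\infty}(f_nI(|f_n|>r))_{n,\mathcal{U}}$, is a bounded linear idempotent (projection).
   Context: $L^{p}=L^{p}([0,1],\mu)$, $\mu$ Lebesgue measure, real scalars. $(L^{p})^{\mathcal{U}}$ is the ultrapower of $L^p$ (bounded sequences modulo those with $\lim_{n,\mathcal{U}}\|f_n\|_p=0$), $(f_n)_{n,\mathcal{U}}$ the class of $(f_n)$. $I(|f|>r)$ denotes the indicator function of $\{t:|f(t)|>r\}$. *)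

theory Defs
  imports "HOL-Analysis.Analysis"
begin

definition nonprincipal_ultrafilter :: "nat filter \<Rightarrow> bool" where
  "nonprincipal_ultrafilter U \<longleftrightarrow>
     U \<noteq> bot \<and>
     (\<forall>P. eventually P U \<or> eventually (\<lambda>n. \<not> P n) U) \<and>
     (\<forall>m. eventually (\<lambda>n. n \<noteq> m) U)"

abbreviation I01 :: "real measure" where
  "I01 \<equiv> lebesgue_on {0..1}"

definition memLp :: "real \<Rightarrow> (real \<Rightarrow> real) \<Rightarrow> bool" where
  "memLp p f \<longleftrightarrow> f \<in> borel_measurable I01 \<and> integrable I01 (\<lambda>x. \<bar>f x\<bar> powr p)"

definition Lp_norm :: "real \<Rightarrow> (real \<Rightarrow> real) \<Rightarrow> real" where
  "Lp_norm p f = (integral\<^sup>L I01 (\<lambda>x. \<bar>f x\<bar> powr p)) powr (1 / p)"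

text \<open>Representatives of elements of the ultrapower: norm-bounded sequences in L^p.\<close>
definition Lp_bseq :: "real \<Rightarrow> (nat \<Rightarrow> real \<Rightarrow> real) \<Rightarrow> bool" where
  "Lp_bseq p f \<longleftrightarrow> (\<forall>n. memLp p (f n)) \<and> bdd_above (range (\<lambda>n. Lp_norm p (f n)))"

definition up_norm :: "real \<Rightarrow> nat filter \<Rightarrow> (nat \<Rightarrow> real \<Rightarrow> real) \<Rightarrow> real" where
  "up_norm p U f = Lim U (\<lambda>n. Lp_norm p (f n))"

definition up_eq :: "real \<Rightarrow> nat filter \<Rightarrow> (nat \<Rightarrow> real \<Rightarrow> real) \<Rightarrow> (nat \<Rightarrow> real \<Rightarrow> real) \<Rightarrow> bool" where
  "up_eq p U f g \<longleftrightarrow> up_norm p U (\<lambda>n x. f n x - g n x) = 0"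

definition trunc_above :: "real \<Rightarrow> (real \<Rightarrow> real) \<Rightarrow> real \<Rightarrow> real" where
  "trunc_above r f = (\<lambda>x. if \<bar>f x\<bar> > r then f x else 0)"

end

theory Submission imports Defs begin

lemma up_ev_ge:
  assumes "nonprincipal_ultrafilter U"
  shows "eventually (\<lambda>n. K \<le> n) U"
proof -
  have "\<forall>m\<in>{..<K}. eventually (\<lambda>n. n \<noteq> m) U"
    using assms unfolding nonprincipal_ultrafilter_def by auto
  then have "eventually (\<lambda>n. \<forall>m\<in>{..<K}. n \<noteq> m) U"
    by (rule eventually_ball_finite[rotated]) simp
  then show ?thesis by eventually_elim auto
qed

lemma up_conv:
  fixes s :: "nat \<Rightarrow> real"
  assumes U: "nonprincipal_ultrafilter U" and b: "\<And>n. \<bar>s n\<bar> \<le> B"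
  shows "\<exists>l. (s \<longlongrightarrow> l) U"
proof -
  let ?F = "filtermap s U"
  have Ub: "U \<noteq> bot" using U unfolding nonprincipal_ultrafilter_def by auto
  have "?F \<noteq> bot" using Ub by (simp add: filtermap_bot_iff)
  moreover have "eventually (\<lambda>x. x \<in> {-B..B}) ?F"
    using b by (auto simp: eventually_filtermap abs_le_iff intro!: always_eventually) (metis minus_le_iff)
  ultimately obtain l where "inf (nhds l) ?F \<noteq> bot"
    using compact_filter[THEN iffD1, OF compact_Icc] by blast
  have "(s \<longlongrightarrow> l) U"
    unfolding tendsto_def
  proof (intro allI impI)
    fix S :: "real set" assume "open S" "l \<in> S"
    show "eventually (\<lambda>n. s n \<in> S) U"
    proof (rule ccontr)
      assume "\<not> eventually (\<lambda>n. s n \<in> S) U"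
      then have "eventually (\<lambda>n. s n \<notin> S) U" using U unfolding nonprincipal_ultrafilter_def by blast
      then have e1: "eventually (\<lambda>x. x \<notin> S) ?F" by (simp add: eventually_filtermap)
      have e2: "eventually (\<lambda>x. x \<in> S) (nhds l)" using \<open>open S\<close> \<open>l \<in> S\<close> eventually_nhds by blast
      have "eventually (\<lambda>_. False) (inf (nhds l) ?F)"
        unfolding eventually_inf using e1 e2 by blast
      then show False using \<open>inf (nhds l) ?F \<noteq> bot\<close> by (simp add: eventually_False)
    qed
  qed
  then show ?thesis by blast
qed


definition ip :: "real \<Rightarrow> (real \<Rightarrow> real) \<Rightarrow> real" where
  "ip p f = integral\<^sup>L I01 (\<lambda>x. \<bar>f x\<bar> powr p)"

lemma ip_nonneg: "0 \<le> ip p f"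
  unfolding ip_def by (rule integral_nonneg_AE) auto

lemma Lp_norm_ip: "Lp_norm p f = ip p f powr (1/p)"
  unfolding Lp_norm_def ip_def ..

lemma Lp_norm_nonneg: "0 \<le> Lp_norm p f"
  unfolding Lp_norm_def by simp

lemma ip_Lp_norm: "p > 0 \<Longrightarrow> ip p f = Lp_norm p f powr p"
  unfolding Lp_norm_ip using ip_nonneg[of p f] by (simp add: powr_powr)

lemma pow_quasi:
  fixes x y p :: real assumes "p > 0"
  shows "\<bar>x + y\<bar> powr p \<le> 2 powr p * (\<bar>x\<bar> powr p + \<bar>y\<bar> powr p)"
proof -
  let ?m = "max \<bar>x\<bar> \<bar>y\<bar>"
  have "\<bar>x + y\<bar> powr p \<le> (2 * ?m) powr p"
    by (rule powr_mono2) (use assms in auto)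
  also have "\<dots> = 2 powr p * ?m powr p" by (simp add: powr_mult)
  also have "?m powr p \<le> \<bar>x\<bar> powr p + \<bar>y\<bar> powr p"
    by (auto simp: max_def)
  hence "2 powr p * ?m powr p \<le> 2 powr p * (\<bar>x\<bar> powr p + \<bar>y\<bar> powr p)" by simp
  finally show ?thesis .
qed

lemma pow_quasi_lin:
  fixes x y p a b :: real assumes "p > 0"
  shows "\<bar>a * x + b * y\<bar> powr p \<le> 2 powr p * (\<bar>a\<bar> powr p * \<bar>x\<bar> powr p + \<bar>b\<bar> powr p * \<bar>y\<bar> powr p)"
  using pow_quasi[OF assms, of "a*x" "b*y"] by (simp add: abs_mult powr_mult)

lemma memLp_lin:
  assumes p: "p > 0" and f: "memLp p f" and g: "memLp p g"
  shows "memLp p (\<lambda>x. a * f x + b * g x)"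
proof -
  have [measurable]: "f \<in> borel_measurable I01" "g \<in> borel_measurable I01" using f g unfolding memLp_def by auto
  have m: "(\<lambda>x. a * f x + b * g x) \<in> borel_measurable I01" by measurable
  have "integrable I01 (\<lambda>x. 2 powr p * (\<bar>a\<bar> powr p * \<bar>f x\<bar> powr p + \<bar>b\<bar> powr p * \<bar>g x\<bar> powr p))"
    using f g unfolding memLp_def by auto
  moreover have "(\<lambda>x. \<bar>a * f x + b * g x\<bar> powr p) \<in> borel_measurable I01" using m by measurable
  ultimately have "integrable I01 (\<lambda>x. \<bar>a * f x + b * g x\<bar> powr p)"
    by (rule Bochner_Integration.integrable_bound) (auto intro!: always_eventually pow_quasi_lin[OF p] simp: abs_of_nonneg)
  then show ?thesis using m unfolding memLp_def by auto
qed

lemma ip_lin_le: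
  assumes p: "p > 0" and f: "memLp p f" and g: "memLp p g"
  shows "ip p (\<lambda>x. a * f x + b * g x) \<le> 2 powr p * (\<bar>a\<bar> powr p * ip p f + \<bar>b\<bar> powr p * ip p g)"
proof -
  have "ip p (\<lambda>x. a * f x + b * g x) \<le> integral\<^sup>L I01 (\<lambda>x. 2 powr p * (\<bar>a\<bar> powr p * \<bar>f x\<bar> powr p + \<bar>b\<bar> powr p * \<bar>g x\<bar> powr p))"
    unfolding ip_def
    by (rule integral_mono) (use memLp_lin[OF p f g] f g in \<open>auto simp: memLp_def intro!: pow_quasi_lin[OF p]\<close>)
  also have "\<dots> = 2 powr p * (\<bar>a\<bar> powr p * ip p f + \<bar>b\<bar> powr p * ip p g)"
    using f g unfolding ip_def memLp_def by simp
  finally show ?thesis .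
qed

lemma memLp_dom:
  assumes f: "memLp p f" and h: "h \<in> borel_measurable I01" and le: "\<And>x. x \<in> space I01 \<Longrightarrow> \<bar>h x\<bar> \<le> \<bar>f x\<bar>"
    and p: "p > 0"
  shows "memLp p h" "ip p h \<le> ip p f"
proof -
  have i: "integrable I01 (\<lambda>x. \<bar>h x\<bar> powr p)"
  proof (rule Bochner_Integration.integrable_bound)
    show "integrable I01 (\<lambda>x. \<bar>f x\<bar> powr p)" using f unfolding memLp_def by auto
    show "(\<lambda>x. \<bar>h x\<bar> powr p) \<in> borel_measurable I01" using h by measurable
  qed (use le p in \<open>auto intro!: AE_I2 powr_mono2\<close>)
  then show "memLp p h" using h unfolding memLp_def by auto
  show "ip p h \<le> ip p f" unfolding ip_def
    by (rule integral_mono) (use i f le p in \<open>auto simp: memLp_def intro!: powr_mono2\<close>)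
qed

lemma trunc_meas[measurable]:
  assumes [measurable]: "f \<in> borel_measurable I01"
  shows "trunc_above r f \<in> borel_measurable I01"
  unfolding trunc_above_def by measurable

lemma memLp_trunc:
  assumes "memLp p f" "p > 0"
  shows "memLp p (trunc_above r f)" "ip p (trunc_above r f) \<le> ip p f"
  using memLp_dom[OF assms(1) trunc_meas[of f r] _ assms(2)] assms(1)
  by (auto simp: memLp_def trunc_above_def)


lemma npu_nbot: "nonprincipal_ultrafilter U \<Longrightarrow> U \<noteq> bot"
  unfolding nonprincipal_ultrafilter_def by auto

lemma bseq_ip:
  assumes "Lp_bseq p f" "p > 0"
  obtains M where "\<And>n. ip p (f n) \<le> M"
proof -
  obtain B where B: "\<And>n. Lp_norm p (f n) \<le> B"
    using assms(1) unfolding Lp_bseq_def bdd_above_def by auto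
  have "ip p (f n) \<le> B powr p" for n
    unfolding ip_Lp_norm[OF assms(2)] by (rule powr_mono2) (use B assms(2) in \<open>auto simp: Lp_norm_nonneg\<close>)
  then show ?thesis using that by blast
qed

lemma ip_bseq:
  assumes "\<And>n. memLp p (f n)" "\<And>n. ip p (f n) \<le> M" "p > 0"
  shows "Lp_bseq p f"
proof -
  have "Lp_norm p (f n) \<le> max M 0 powr (1/p)" for n
    unfolding Lp_norm_ip by (rule powr_mono2) (use assms(2)[of n] assms(3) ip_nonneg[of p "f n"] in auto)
  then show ?thesis using assms unfolding Lp_bseq_def bdd_above_def by auto
qed

lemma bseq_norm_bound:
  assumes "Lp_bseq p f"
  obtains B where "\<And>n. \<bar>Lp_norm p (f n)\<bar> \<le> B"
  using assms unfolding Lp_bseq_def bdd_above_def by (auto simp: Lp_norm_nonneg)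

lemma bseq_lin:
  assumes p: "p > 0" and f: "Lp_bseq p f" and g: "Lp_bseq p g"
  shows "Lp_bseq p (\<lambda>n x. a * f n x + b * g n x)"
proof -
  obtain M1 where M1: "\<And>n. ip p (f n) \<le> M1" using bseq_ip[OF f p] by blast
  obtain M2 where M2: "\<And>n. ip p (g n) \<le> M2" using bseq_ip[OF g p] by blast
  have mf: "memLp p (f n)" and mg: "memLp p (g n)" for n using f g unfolding Lp_bseq_def by auto
  show ?thesis
  proof (rule ip_bseq[OF _ _ p])
    show "memLp p (\<lambda>x. a * f n x + b * g n x)" for n by (rule memLp_lin[OF p mf mg])
    fix n
    have "ip p (\<lambda>x. a * f n x + b * g n x) \<le> 2 powr p * (\<bar>a\<bar> powr p * ip p (f n) + \<bar>b\<bar> powr p * ip p (g n))"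
      by (rule ip_lin_le[OF p mf mg])
    also have "\<dots> \<le> 2 powr p * (\<bar>a\<bar> powr p * M1 + \<bar>b\<bar> powr p * M2)"
      using M1 M2 by (intro mult_left_mono add_mono) auto
    finally show "ip p (\<lambda>x. a * f n x + b * g n x) \<le> 2 powr p * (\<bar>a\<bar> powr p * M1 + \<bar>b\<bar> powr p * M2)" .
  qed
qed

lemma bseq_diff:
  assumes p: "p > 0" and f: "Lp_bseq p f" and g: "Lp_bseq p g"
  shows "Lp_bseq p (\<lambda>n x. f n x - g n x)"
  using bseq_lin[OF p f g, of 1 "-1"] by simp

lemma up_zero:
  assumes U: "U \<noteq> bot" and p: "p > 0" and e: "\<And>e. e > 0 \<Longrightarrow> eventually (\<lambda>n. ip p (h n) < e) U"
  shows "up_norm p U h = 0"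
proof -
  have "((\<lambda>n. Lp_norm p (h n)) \<longlongrightarrow> 0) U"
  proof (rule order_tendstoI)
    fix a :: real assume "0 < a"
    have "eventually (\<lambda>n. ip p (h n) < a powr p) U" using e \<open>0 < a\<close> by simp
    then show "eventually (\<lambda>n. Lp_norm p (h n) < a) U"
    proof eventually_elim
      case (elim n)
      have "ip p (h n) powr (1/p) < (a powr p) powr (1/p)"
        by (rule powr_less_mono2) (use elim p ip_nonneg in auto)
      then show ?case using p \<open>0<a\<close> by (simp add: Lp_norm_ip powr_powr)
    qed
  next
    fix a :: real assume "a < 0"
    then show "eventually (\<lambda>n. a < Lp_norm p (h n)) U"
      by (intro always_eventually) (metis Lp_norm_nonneg less_le_trans)
  qed
  then show ?thesis unfolding up_norm_def using U by (simp add: tendsto_Lim)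
qed

lemma up_lim:
  assumes U: "nonprincipal_ultrafilter U" and f: "Lp_bseq p f"
  shows "((\<lambda>n. Lp_norm p (f n)) \<longlongrightarrow> up_norm p U f) U"
proof -
  obtain B where "\<And>n. \<bar>Lp_norm p (f n)\<bar> \<le> B" using bseq_norm_bound[OF f] by blast
  then obtain l where l: "((\<lambda>n. Lp_norm p (f n)) \<longlongrightarrow> l) U" using up_conv[OF U, of "\<lambda>n. Lp_norm p (f n)" B] by blast
  then show ?thesis unfolding up_norm_def using npu_nbot[OF U] by (simp add: tendsto_Lim)
qed

lemma up_null:
  assumes U: "nonprincipal_ultrafilter U" and p: "p > 0" and f: "Lp_bseq p f" and g: "Lp_bseq p g"
    and eq: "up_eq p U f g" and e: "e > 0"
  shows "eventually (\<lambda>n. ip p (\<lambda>x. f n x - g n x) < e) U"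
proof -
  have "((\<lambda>n. Lp_norm p (\<lambda>x. f n x - g n x)) \<longlongrightarrow> 0) U"
    using up_lim[OF U bseq_diff[OF p f g]] eq unfolding up_eq_def by simp
  then have "eventually (\<lambda>n. Lp_norm p (\<lambda>x. f n x - g n x) < e powr (1/p)) U"
    using e by (intro order_tendstoD) auto
  then show ?thesis
  proof eventually_elim
    case (elim n)
    have "Lp_norm p (\<lambda>x. f n x - g n x) powr p < (e powr (1/p)) powr p"
      by (rule powr_less_mono2) (use elim p Lp_norm_nonneg in auto)
    then show ?case using p e by (simp add: ip_Lp_norm[OF p] powr_powr)
  qed
qed

lemma up_le:
  assumes U: "nonprincipal_ultrafilter U" and f: "Lp_bseq p f"
    and ev: "eventually (\<lambda>n. Lp_norm p (f n) \<le> c) U"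
  shows "up_norm p U f \<le> c"
  using tendsto_upperbound[OF up_lim[OF U f] ev npu_nbot[OF U]] .

lemma up_nonneg:
  assumes U: "nonprincipal_ultrafilter U" and f: "Lp_bseq p f"
  shows "0 \<le> up_norm p U f"
  using tendsto_lowerbound[OF up_lim[OF U f] _ npu_nbot[OF U]] by (simp add: Lp_norm_nonneg)

lemma up_mono:
  assumes U: "nonprincipal_ultrafilter U" and f: "Lp_bseq p f" and g: "Lp_bseq p g"
    and le: "\<And>n. Lp_norm p (f n) \<le> Lp_norm p (g n)"
  shows "up_norm p U f \<le> up_norm p U g"
  using tendsto_le[OF npu_nbot[OF U] up_lim[OF U g] up_lim[OF U f]] le by simp


lemma fin01: "finite_measure I01"
  by (rule finite_measure_lebesgue_on) simp

lemma emeas_fin: "emeasure I01 A < \<infinity>"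
  using finite_measure.emeasure_finite[OF fin01, of A] by (simp add: top.not_eq_extremum)

lemma int_ind: "A \<in> sets I01 \<Longrightarrow> integrable I01 (indicator A :: real \<Rightarrow> real)"
  using emeas_fin by auto

lemma int_ind_mult: "A \<in> sets I01 \<Longrightarrow> integrable I01 f \<Longrightarrow> integrable I01 (\<lambda>x. indicator A x * f x :: real)"
  using integrable_real_mult_indicator[of A I01 f] by (simp add: mult.commute)

definition EI :: "real \<Rightarrow> nat filter \<Rightarrow> (nat \<Rightarrow> real \<Rightarrow> real) \<Rightarrow> bool" where
  "EI p U h \<longleftrightarrow> (\<forall>e>0. \<exists>d>0. eventually (\<lambda>n. \<forall>A\<in>sets I01. measure I01 A < d \<longrightarrow>
      integral\<^sup>L I01 (\<lambda>x. indicator A x * \<bar>h n x\<bar> powr p) < e) U)"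

definition SS :: "nat filter \<Rightarrow> (nat \<Rightarrow> real \<Rightarrow> real) \<Rightarrow> bool" where
  "SS U h \<longleftrightarrow> (\<forall>d>0. eventually (\<lambda>n. \<exists>A\<in>sets I01. measure I01 A < d \<and>
      (\<forall>x\<in>space I01. x \<notin> A \<longrightarrow> h n x = 0)) U)"

lemma EI_lin:
  assumes p: "p > 0" and mh: "\<And>n. memLp p (h n)" and mg: "\<And>n. memLp p (g n)"
    and h: "EI p U h" and g: "EI p U g"
  shows "EI p U (\<lambda>n x. a * h n x + b * g n x)"
  unfolding EI_def
proof (intro allI impI)
  fix e :: real assume e: "e > 0"
  define c where "c = 2 powr p * (\<bar>a\<bar> powr p + \<bar>b\<bar> powr p + 1)"
  have c: "c > 0" unfolding c_def by (intro mult_pos_pos add_nonneg_pos) auto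
  have e': "e / c > 0" using e c by simp
  obtain d1 where d1: "d1 > 0" and ev1: "eventually (\<lambda>n. \<forall>A\<in>sets I01. measure I01 A < d1 \<longrightarrow>
      integral\<^sup>L I01 (\<lambda>x. indicator A x * \<bar>h n x\<bar> powr p) < e / c) U"
    using h e' unfolding EI_def by blast
  obtain d2 where d2: "d2 > 0" and ev2: "eventually (\<lambda>n. \<forall>A\<in>sets I01. measure I01 A < d2 \<longrightarrow>
      integral\<^sup>L I01 (\<lambda>x. indicator A x * \<bar>g n x\<bar> powr p) < e / c) U"
    using g e' unfolding EI_def by blast
  show "\<exists>d>0. eventually (\<lambda>n. \<forall>A\<in>sets I01. measure I01 A < d \<longrightarrow>
      integral\<^sup>L I01 (\<lambda>x. indicator A x * \<bar>a * h n x + b * g n x\<bar> powr p) < e) U"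
  proof (intro exI conjI)
    show "min d1 d2 > 0" using d1 d2 by simp
    show "eventually (\<lambda>n. \<forall>A\<in>sets I01. measure I01 A < min d1 d2 \<longrightarrow>
      integral\<^sup>L I01 (\<lambda>x. indicator A x * \<bar>a * h n x + b * g n x\<bar> powr p) < e) U"
      using ev1 ev2
    proof eventually_elim
      case (elim n)
      show ?case
      proof (intro ballI impI)
        fix A assume A: "A \<in> sets I01" "measure I01 A < min d1 d2"
        have i1: "integrable I01 (\<lambda>x. indicator A x * \<bar>h n x\<bar> powr p)"
          using mh[of n] A by (intro int_ind_mult) (auto simp: memLp_def)
        have i2: "integrable I01 (\<lambda>x. indicator A x * \<bar>g n x\<bar> powr p)"
          using mg[of n] A by (intro int_ind_mult) (auto simp: memLp_def)
        have i3: "integrable I01 (\<lambda>x. indicator A x * \<bar>a * h n x + b * g n x\<bar> powr p)"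
          using memLp_lin[OF p mh mg, of a n b] A by (intro int_ind_mult) (auto simp: memLp_def)
        have I1: "integral\<^sup>L I01 (\<lambda>x. indicator A x * \<bar>h n x\<bar> powr p) \<le> e / c"
          using elim A by auto
        have I2: "integral\<^sup>L I01 (\<lambda>x. indicator A x * \<bar>g n x\<bar> powr p) \<le> e / c"
          using elim A by auto
        have "integral\<^sup>L I01 (\<lambda>x. indicator A x * \<bar>a * h n x + b * g n x\<bar> powr p)
          \<le> integral\<^sup>L I01 (\<lambda>x. 2 powr p * (\<bar>a\<bar> powr p * (indicator A x * \<bar>h n x\<bar> powr p)
               + \<bar>b\<bar> powr p * (indicator A x * \<bar>g n x\<bar> powr p)))"
        proof (rule integral_mono[OF i3])
          show "integrable I01 (\<lambda>x. 2 powr p * (\<bar>a\<bar> powr p * (indicator A x * \<bar>h n x\<bar> powr p)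
               + \<bar>b\<bar> powr p * (indicator A x * \<bar>g n x\<bar> powr p)))" using i1 i2 by auto
          fix x
          show "indicator A x * \<bar>a * h n x + b * g n x\<bar> powr p \<le> 2 powr p * (\<bar>a\<bar> powr p * (indicator A x * \<bar>h n x\<bar> powr p)
               + \<bar>b\<bar> powr p * (indicator A x * \<bar>g n x\<bar> powr p))"
            using pow_quasi_lin[OF p, of a "h n x" b "g n x"] by (cases "x \<in> A") auto
        qed
        also have "\<dots> = 2 powr p * (\<bar>a\<bar> powr p * integral\<^sup>L I01 (\<lambda>x. indicator A x * \<bar>h n x\<bar> powr p)
               + \<bar>b\<bar> powr p * integral\<^sup>L I01 (\<lambda>x. indicator A x * \<bar>g n x\<bar> powr p))"
          using i1 i2 by simp
        also have "\<dots> \<le> 2 powr p * (\<bar>a\<bar> powr p * (e / c) + \<bar>b\<bar> powr p * (e / c))"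
          using I1 I2 by (intro mult_left_mono add_mono) auto
        also have "\<dots> = e * ((2 powr p * (\<bar>a\<bar> powr p + \<bar>b\<bar> powr p)) / c)"
          using c by (simp add: field_simps)
        also have "\<dots> < e"
        proof -
          have "(2 powr p * (\<bar>a\<bar> powr p + \<bar>b\<bar> powr p)) / c < 1"
            using c unfolding c_def by (simp add: field_simps)
          then have "e * ((2 powr p * (\<bar>a\<bar> powr p + \<bar>b\<bar> powr p)) / c) < e * 1"
            using e by (intro mult_strict_left_mono) auto
          then show ?thesis by simp
        qed
        finally show "integral\<^sup>L I01 (\<lambda>x. indicator A x * \<bar>a * h n x + b * g n x\<bar> powr p) < e" .
      qed
    qed
  qed
qed

lemma EI_null:
  assumes mh: "\<And>n. memLp p (h n)" and ev: "\<And>e. e > 0 \<Longrightarrow> eventually (\<lambda>n. ip p (h n) < e) U"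
  shows "EI p U h"
  unfolding EI_def
proof (intro allI impI exI conjI)
  fix e :: real assume e: "e > 0"
  show "(1::real) > 0" by simp
  show "eventually (\<lambda>n. \<forall>A\<in>sets I01. measure I01 A < 1 \<longrightarrow>
      integral\<^sup>L I01 (\<lambda>x. indicator A x * \<bar>h n x\<bar> powr p) < e) U"
    using ev[OF e]
  proof eventually_elim
    case (elim n)
    show ?case
    proof (intro ballI impI)
      fix A assume A: "A \<in> sets I01"
      have "integral\<^sup>L I01 (\<lambda>x. indicator A x * \<bar>h n x\<bar> powr p) \<le> ip p (h n)"
        unfolding ip_def
      proof (rule integral_mono)
        show "integrable I01 (\<lambda>x. indicator A x * \<bar>h n x\<bar> powr p)"
          using mh[of n] A by (intro int_ind_mult) (auto simp: memLp_def)
      qed (use mh[of n] in \<open>auto simp: memLp_def indicator_def\<close>)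
      then show "integral\<^sup>L I01 (\<lambda>x. indicator A x * \<bar>h n x\<bar> powr p) < e" using elim by simp
    qed
  qed
qed

lemma SS_lin:
  assumes h: "SS U h" and g: "SS U g"
  shows "SS U (\<lambda>n x. a * h n x + b * g n x)"
  unfolding SS_def
proof (intro allI impI)
  fix d :: real assume d: "d > 0"
  have "eventually (\<lambda>n. \<exists>A\<in>sets I01. measure I01 A < d/2 \<and> (\<forall>x\<in>space I01. x \<notin> A \<longrightarrow> h n x = 0)) U"
    using h unfolding SS_def by (meson d half_gt_zero)
  moreover have "eventually (\<lambda>n. \<exists>A\<in>sets I01. measure I01 A < d/2 \<and> (\<forall>x\<in>space I01. x \<notin> A \<longrightarrow> g n x = 0)) U"
    using g unfolding SS_def by (meson d half_gt_zero)
  ultimately show "eventually (\<lambda>n. \<exists>A\<in>sets I01. measure I01 A < d \<and> (\<forall>x\<in>space I01. x \<notin> A \<longrightarrow> a * h n x + b * g n x = 0)) U"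
  proof eventually_elim
    case (elim n)
    then obtain A1 A2 where A: "A1 \<in> sets I01" "A2 \<in> sets I01" "measure I01 A1 < d/2" "measure I01 A2 < d/2"
      "\<forall>x\<in>space I01. x \<notin> A1 \<longrightarrow> h n x = 0" "\<forall>x\<in>space I01. x \<notin> A2 \<longrightarrow> g n x = 0" by blast
    have "measure I01 (A1 \<union> A2) \<le> measure I01 A1 + measure I01 A2" using A by (intro measure_Un_le) auto
    then show ?case using A by (intro bexI[of _ "A1 \<union> A2"]) auto
  qed
qed

lemma EI_SS_zero:
  assumes mh: "\<And>n. memLp p (h n)" and h1: "EI p U h" and h2: "SS U h" and e: "e > 0" and p: "p > 0"
  shows "eventually (\<lambda>n. ip p (h n) < e) U"
proof -
  obtain d where d: "d > 0" and ev1: "eventually (\<lambda>n. \<forall>A\<in>sets I01. measure I01 A < d \<longrightarrow>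
      integral\<^sup>L I01 (\<lambda>x. indicator A x * \<bar>h n x\<bar> powr p) < e) U"
    using h1 e unfolding EI_def by blast
  have ev2: "eventually (\<lambda>n. \<exists>A\<in>sets I01. measure I01 A < d \<and> (\<forall>x\<in>space I01. x \<notin> A \<longrightarrow> h n x = 0)) U"
    using h2 d unfolding SS_def by blast
  from ev1 ev2 show ?thesis
  proof eventually_elim
    case (elim n)
    then obtain A where A: "A \<in> sets I01" "measure I01 A < d" "\<forall>x\<in>space I01. x \<notin> A \<longrightarrow> h n x = 0" by blast
    have "ip p (h n) = integral\<^sup>L I01 (\<lambda>x. indicator A x * \<bar>h n x\<bar> powr p)"
      unfolding ip_def by (rule Bochner_Integration.integral_cong) (use A p in \<open>auto simp: indicator_def\<close>)
    then show ?case using elim A by auto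
  qed
qed

lemma markov:
  assumes f: "memLp p f" and t: "t > 0" and p: "p > 0"
  shows "{x\<in>space I01. t < \<bar>f x\<bar>} \<in> sets I01"
    and "measure I01 {x\<in>space I01. t < \<bar>f x\<bar>} \<le> ip p f / t powr p"
proof -
  have [measurable]: "f \<in> borel_measurable I01" using f unfolding memLp_def by auto
  show S: "{x\<in>space I01. t < \<bar>f x\<bar>} \<in> sets I01" by measurable
  let ?S = "{x\<in>space I01. t < \<bar>f x\<bar>}"
  have "integral\<^sup>L I01 (\<lambda>x. t powr p * indicator ?S x) \<le> ip p f"
    unfolding ip_def
  proof (rule integral_mono)
    show "integrable I01 (\<lambda>x. t powr p * indicator ?S x)" using int_ind[OF S] by simp
    show "integrable I01 (\<lambda>x. \<bar>f x\<bar> powr p)" using f unfolding memLp_def by auto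
    fix x show "t powr p * indicator ?S x \<le> \<bar>f x\<bar> powr p"
      using t p by (auto simp: indicator_def intro!: powr_mono2)
  qed
  moreover have "integral\<^sup>L I01 (\<lambda>x. t powr p * indicator ?S x) = t powr p * measure I01 ?S"
  proof -
    have "?S \<inter> space I01 = ?S" by auto
    then show ?thesis by simp
  qed
  ultimately have "t powr p * measure I01 ?S \<le> ip p f" by linarith
  then show "measure I01 ?S \<le> ip p f / t powr p" using t by (simp add: field_simps)
qed


definition aa :: "real \<Rightarrow> (nat \<Rightarrow> real \<Rightarrow> real) \<Rightarrow> nat \<Rightarrow> real \<Rightarrow> real" where
  "aa p f n s = ip p (trunc_above s (f n))"
definition phi :: "real \<Rightarrow> nat filter \<Rightarrow> (nat \<Rightarrow> real \<Rightarrow> real) \<Rightarrow> real \<Rightarrow> real" where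
  "phi p U f s = Lim U (\<lambda>n. aa p f n s)"
definition LL :: "real \<Rightarrow> nat filter \<Rightarrow> (nat \<Rightarrow> real \<Rightarrow> real) \<Rightarrow> real" where
  "LL p U f = Inf (range (phi p U f))"
definition kk :: "real \<Rightarrow> nat filter \<Rightarrow> (nat \<Rightarrow> real \<Rightarrow> real) \<Rightarrow> nat \<Rightarrow> nat" where
  "kk p U f n = Max ({0} \<union> {k. 1 \<le> k \<and> k \<le> n \<and> LL p U f - 1 / real k < aa p f n (real k)})"
definition RR :: "real \<Rightarrow> nat filter \<Rightarrow> (nat \<Rightarrow> real \<Rightarrow> real) \<Rightarrow> nat \<Rightarrow> real \<Rightarrow> real" where
  "RR p U f = (\<lambda>n. trunc_above (real (kk p U f n)) (f n))"

lemma memLp_diff: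
  assumes "p > 0" "memLp p f" "memLp p g"
  shows "memLp p (\<lambda>x. f x - g x)"
  using memLp_lin[OF assms, of 1 "-1"] by simp

context
  fixes p :: real and U :: "nat filter" and f :: "nat \<Rightarrow> real \<Rightarrow> real" and M :: real
  assumes p: "p > 1" and U: "nonprincipal_ultrafilter U" and f: "Lp_bseq p f"
    and M: "\<And>n. ip p (f n) \<le> M"
begin

lemma p0: "p > 0" using p by simp

lemma mf: "memLp p (f n)" using f unfolding Lp_bseq_def by auto

lemma M0: "0 \<le> M" using M[of 0] ip_nonneg[of p "f 0"] by simp

lemma aa_bound: "0 \<le> aa p f n s" "aa p f n s \<le> M"
  unfolding aa_def using ip_nonneg memLp_trunc(2)[OF mf[of n] p0, of s] M[of n] by auto

lemma aa_mono: "s \<le> t \<Longrightarrow> aa p f n t \<le> aa p f n s"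
  unfolding aa_def
  by (rule memLp_dom(2)[OF memLp_trunc(1)[OF mf p0] trunc_meas _ p0])
     (use mf in \<open>auto simp: memLp_def trunc_above_def\<close>)

lemma aa_lim: "((\<lambda>n. aa p f n s) \<longlongrightarrow> phi p U f s) U"
proof -
  obtain l where l: "((\<lambda>n. aa p f n s) \<longlongrightarrow> l) U"
    using up_conv[OF U, of "\<lambda>n. aa p f n s" M] aa_bound by force
  then show ?thesis unfolding phi_def using npu_nbot[OF U] by (simp add: tendsto_Lim)
qed

lemma phi_nonneg: "0 \<le> phi p U f s"
  by (rule tendsto_lowerbound[OF aa_lim _ npu_nbot[OF U]]) (simp add: aa_bound)

lemma phi_mono: "s \<le> t \<Longrightarrow> phi p U f t \<le> phi p U f s"
  by (rule tendsto_le[OF npu_nbot[OF U] aa_lim aa_lim]) (simp add: aa_mono)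

lemma LL_le: "LL p U f \<le> phi p U f s"
  unfolding LL_def by (rule cInf_lower) (auto intro: bdd_belowI[of _ 0] phi_nonneg)

lemma LL_approx: "e > 0 \<Longrightarrow> \<exists>s. phi p U f s < LL p U f + e"
  using cInf_lessD[of "range (phi p U f)" "LL p U f + e"] unfolding LL_def by auto

lemma trunc_diff_pow:
  assumes "r \<le> t"
  shows "\<bar>trunc_above r g x - trunc_above t g x\<bar> powr p = \<bar>trunc_above r g x\<bar> powr p - \<bar>trunc_above t g x\<bar> powr p"
  using assms by (auto simp: trunc_above_def)

lemma ip_trunc_diff:
  assumes "r \<le> t"
  shows "ip p (\<lambda>x. trunc_above r (f n) x - trunc_above t (f n) x) = aa p f n r - aa p f n t"
proof -
  have "ip p (\<lambda>x. trunc_above r (f n) x - trunc_above t (f n) x) =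
     integral\<^sup>L I01 (\<lambda>x. \<bar>trunc_above r (f n) x\<bar> powr p - \<bar>trunc_above t (f n) x\<bar> powr p)"
    unfolding ip_def using trunc_diff_pow[OF assms] by simp
  also have "\<dots> = aa p f n r - aa p f n t"
    unfolding aa_def ip_def
    by (rule Bochner_Integration.integral_diff) (use memLp_trunc(1)[OF mf p0] in \<open>auto simp: memLp_def\<close>)
  finally show ?thesis .
qed

lemma kk_prop: "1 \<le> kk p U f n \<Longrightarrow> LL p U f - 1 / real (kk p U f n) < aa p f n (real (kk p U f n))"
proof -
  let ?S = "{0} \<union> {k. 1 \<le> k \<and> k \<le> n \<and> LL p U f - 1 / real k < aa p f n (real k)}"
  have "finite ?S" by (rule finite_subset[of _ "{..n}"]) auto
  then have "kk p U f n \<in> ?S" unfolding kk_def by (intro Max_in) auto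
  then show "1 \<le> kk p U f n \<Longrightarrow> ?thesis" by auto
qed

lemma kk_ge:
  assumes K: "1 \<le> K"
  shows "eventually (\<lambda>n. K \<le> kk p U f n) U"
proof -
  have "0 < 1 / real K" using K by simp
  then have "phi p U f (real K) > LL p U f - 1 / real K" using LL_le[of "real K"] by linarith
  then have "eventually (\<lambda>n. LL p U f - 1 / real K < aa p f n (real K)) U"
    using aa_lim order_tendstoD(1) by blast
  then show ?thesis using up_ev_ge[OF U, of K]
  proof eventually_elim
    case (elim n)
    let ?S = "{0} \<union> {k. 1 \<le> k \<and> k \<le> n \<and> LL p U f - 1 / real k < aa p f n (real k)}"
    have "finite ?S" by (rule finite_subset[of _ "{..n}"]) auto
    moreover have "K \<in> ?S" using elim K by auto
    ultimately show ?case unfolding kk_def by (rule Max_ge)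
  qed
qed

lemma core:
  assumes e: "e > 0"
  shows "\<exists>r0\<ge>1. \<forall>r\<ge>r0. eventually (\<lambda>n. r \<le> real (kk p U f n) \<and>
      aa p f n r - aa p f n (real (kk p U f n)) < e) U"
proof -
  obtain s0 where s0: "phi p U f s0 < LL p U f + e/3" using LL_approx[of "e/3"] e by auto
  define r0 where "r0 = max 1 (max s0 (3/e))"
  show ?thesis
  proof (intro exI[of _ r0] conjI allI impI)
    show "1 \<le> r0" unfolding r0_def by simp
    fix r assume r: "r0 \<le> r"
    define K where "K = nat \<lceil>r\<rceil>"
    have r1: "1 \<le> r" "s0 \<le> r" "3/e \<le> r" using r unfolding r0_def by auto
    have K1: "1 \<le> K" and rK: "r \<le> real K" unfolding K_def using r1 by (auto simp: le_nat_iff)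
    have iK: "1 / real K \<le> e/3"
    proof -
      have "1 / real K \<le> 1 / r" using rK r1 by (intro divide_left_mono) auto
      also have "1 / r \<le> e / 3" using r1 e by (simp add: field_simps)
      finally show ?thesis .
    qed
    have ph: "phi p U f r < LL p U f + e/3" using phi_mono[OF r1(2)] s0 by simp
    have ev3: "eventually (\<lambda>n. aa p f n r < phi p U f r + e/3) U"
      using aa_lim order_tendstoD(2) e by (metis less_add_same_cancel1 zero_less_divide_iff zero_less_numeral)
    show "eventually (\<lambda>n. r \<le> real (kk p U f n) \<and> aa p f n r - aa p f n (real (kk p U f n)) < e) U"
      using kk_ge[OF K1] ev3
    proof eventually_elim
      case (elim n)
      have k1: "1 \<le> kk p U f n" using elim K1 by simp
      have "1 / real (kk p U f n) \<le> 1 / real K" using elim K1 by (intro divide_left_mono) auto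
      then have "LL p U f - e/3 < aa p f n (real (kk p U f n))" using kk_prop[OF k1] iK by simp
      moreover have "r \<le> real (kk p U f n)" using rK elim by linarith
      ultimately show ?case using elim ph by simp
    qed
  qed
qed

end


context
  fixes p :: real and U :: "nat filter" and f :: "nat \<Rightarrow> real \<Rightarrow> real" and M :: real
  assumes p: "p > 1" and U: "nonprincipal_ultrafilter U" and f: "Lp_bseq p f"
    and M: "\<And>n. ip p (f n) \<le> M"
begin

lemma p0': "p > 0" using p by simp

lemma mf': "memLp p (f n)" using f unfolding Lp_bseq_def by auto

lemma R_mem: "memLp p (RR p U f n)" "ip p (RR p U f n) \<le> ip p (f n)"
  unfolding RR_def using memLp_trunc[OF mf' p0'] by auto

lemma R_bseq: "Lp_bseq p (RR p U f)"
  by (rule ip_bseq[OF _ _ p0']) (use R_mem M order_trans in blast)+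

lemma T_bseq: "Lp_bseq p (\<lambda>n. trunc_above r (f n))"
  by (rule ip_bseq[OF _ _ p0']) (use memLp_trunc[OF mf' p0'] M order_trans in blast)+

lemma R_conv: "((\<lambda>r. up_norm p U (\<lambda>n x. trunc_above r (f n) x - RR p U f n x)) \<longlongrightarrow> 0) at_top"
proof (rule order_tendstoI)
  fix a :: real assume "a < 0"
  then show "eventually (\<lambda>r. a < up_norm p U (\<lambda>n x. trunc_above r (f n) x - RR p U f n x)) at_top"
    using up_nonneg[OF U bseq_diff[OF p0' T_bseq R_bseq]] by (intro always_eventually) (meson less_le_trans)
next
  fix a :: real assume a: "0 < a"
  obtain r0 where r0: "\<forall>r\<ge>r0. eventually (\<lambda>n. r \<le> real (kk p U f n) \<and>
      aa p f n r - aa p f n (real (kk p U f n)) < (a/2) powr p) U"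
    using core[OF p U f M, of "(a/2) powr p"] a by auto
  show "eventually (\<lambda>r. up_norm p U (\<lambda>n x. trunc_above r (f n) x - RR p U f n x) < a) at_top"
    unfolding eventually_at_top_linorder
  proof (intro exI allI impI)
    fix r assume "r \<ge> r0"
    then have ev: "eventually (\<lambda>n. r \<le> real (kk p U f n) \<and>
      aa p f n r - aa p f n (real (kk p U f n)) < (a/2) powr p) U" using r0 by auto
    have "up_norm p U (\<lambda>n x. trunc_above r (f n) x - RR p U f n x) \<le> a/2"
    proof (rule up_le[OF U bseq_diff[OF p0' T_bseq R_bseq]])
      show "eventually (\<lambda>n. Lp_norm p (\<lambda>x. trunc_above r (f n) x - RR p U f n x) \<le> a/2) U"
        using ev
      proof eventually_elim
        case (elim n)
        have "ip p (\<lambda>x. trunc_above r (f n) x - RR p U f n x) < (a/2) powr p"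
          using elim ip_trunc_diff[OF p U f M, of r "real (kk p U f n)" n] unfolding RR_def by simp
        then have "ip p (\<lambda>x. trunc_above r (f n) x - RR p U f n x) powr (1/p) \<le> ((a/2) powr p) powr (1/p)"
          by (intro powr_mono2) (use p ip_nonneg in auto)
        then show ?case using a p by (simp add: Lp_norm_ip powr_powr)
      qed
    qed
    then show "up_norm p U (\<lambda>n x. trunc_above r (f n) x - RR p U f n x) < a" using a by simp
  qed
qed

lemma R_SS: "SS U (RR p U f)"
  unfolding SS_def
proof (intro allI impI)
  fix d :: real assume d: "d > 0"
  define t where "t = max 1 (2 * (M + 1) / d)"
  have t1: "1 \<le> t" unfolding t_def by simp
  have tM: "M / t < d"
  proof -
    have q: "0 < 2 * (M + 1) / d" using M0[OF p U f M] d by simp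
    have q2: "0 < t * (2 * (M + 1) / d)" using q t1 by (intro mult_pos_pos) auto
    have tq: "2 * (M + 1) / d \<le> t" unfolding t_def by simp
    have "M / t \<le> M / (2 * (M + 1) / d)" by (rule divide_left_mono[OF tq M0[OF p U f M] q2])
    also have "\<dots> = M * d / (2 * (M + 1))" by simp
    also have "\<dots> < d"
    proof -
      have "0 \<le> M * d" using M0[OF p U f M] d by simp
      then show ?thesis using M0[OF p U f M] d by (simp add: field_simps, intro add_nonneg_pos) auto
    qed
    finally show ?thesis .
  qed
  obtain r0 where r0: "r0 \<ge> 1" "\<forall>r\<ge>r0. eventually (\<lambda>n. r \<le> real (kk p U f n) \<and>
      aa p f n r - aa p f n (real (kk p U f n)) < 1) U"
    using core[OF p U f M, of 1] by auto
  have "eventually (\<lambda>n. max r0 t \<le> real (kk p U f n)) U"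
    using r0(2)[rule_format, of "max r0 t"] by (auto elim: eventually_mono)
  then show "eventually (\<lambda>n. \<exists>A\<in>sets I01. measure I01 A < d \<and> (\<forall>x\<in>space I01. x \<notin> A \<longrightarrow> RR p U f n x = 0)) U"
  proof eventually_elim
    case (elim n)
    let ?k = "real (kk p U f n)"
    have kt: "t \<le> ?k" using elim by simp
    have k0: "?k > 0" using kt t1 by simp
    let ?A = "{x\<in>space I01. ?k < \<bar>f n x\<bar>}"
    have "measure I01 ?A \<le> ip p (f n) / ?k powr p" using markov(2)[OF mf' k0 p0'] .
    also have "\<dots> \<le> M / ?k powr p" using M[of n] k0 by (simp add: divide_right_mono)
    also have "\<dots> \<le> M / t"
    proof -
      have "t \<le> ?k powr p"
      proof -
        have "?k powr 1 \<le> ?k powr p" using kt t1 p by (intro powr_mono) auto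
        then show ?thesis using kt k0 by simp
      qed
      then show ?thesis using M0[OF p U f M] t1 k0 by (intro divide_left_mono) (auto intro!: mult_pos_pos)
    qed
    finally have "measure I01 ?A < d" using tM by simp
    moreover have "?A \<in> sets I01" using markov(1)[OF mf' k0 p0'] .
    moreover have "\<forall>x\<in>space I01. x \<notin> ?A \<longrightarrow> RR p U f n x = 0"
      unfolding RR_def trunc_above_def by auto
    ultimately show ?case by blast
  qed
qed

lemma S_mem: "memLp p (\<lambda>x. f n x - RR p U f n x)"
  by (rule memLp_diff[OF p0' mf' R_mem(1)])

lemma S_EI: "EI p U (\<lambda>n x. f n x - RR p U f n x)"
  unfolding EI_def
proof (intro allI impI)
  fix e :: real assume e: "e > 0"
  obtain r where r: "r \<ge> 1" "eventually (\<lambda>n. r \<le> real (kk p U f n) \<and>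
      aa p f n r - aa p f n (real (kk p U f n)) < e/2) U"
    using core[OF p U f M, of "e/2"] e by auto
  have rp: "r powr p > 0" using r by simp
  show "\<exists>d>0. eventually (\<lambda>n. \<forall>A\<in>sets I01. measure I01 A < d \<longrightarrow>
      integral\<^sup>L I01 (\<lambda>x. indicator A x * \<bar>f n x - RR p U f n x\<bar> powr p) < e) U"
  proof (intro exI conjI)
    show "e / (2 * r powr p) > 0" using e rp by simp
    show "eventually (\<lambda>n. \<forall>A\<in>sets I01. measure I01 A < e / (2 * r powr p) \<longrightarrow>
      integral\<^sup>L I01 (\<lambda>x. indicator A x * \<bar>f n x - RR p U f n x\<bar> powr p) < e) U"
      using r(2)
    proof eventually_elim
      case (elim n)
      let ?k = "real (kk p U f n)"
      show ?case
      proof (intro ballI impI)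
        fix A assume A: "A \<in> sets I01" "measure I01 A < e / (2 * r powr p)"
        have i1: "integrable I01 (\<lambda>x. indicator A x * \<bar>f n x - RR p U f n x\<bar> powr p)"
          using S_mem[of n] A by (intro int_ind_mult) (auto simp: memLp_def)
        have ir: "integrable I01 (\<lambda>x. \<bar>trunc_above r (f n) x\<bar> powr p)"
          and ik: "integrable I01 (\<lambda>x. \<bar>trunc_above ?k (f n) x\<bar> powr p)"
          using memLp_trunc(1)[OF mf' p0'] by (auto simp: memLp_def)
        have "integral\<^sup>L I01 (\<lambda>x. indicator A x * \<bar>f n x - RR p U f n x\<bar> powr p) \<le>
          integral\<^sup>L I01 (\<lambda>x. r powr p * indicator A x + (\<bar>trunc_above r (f n) x\<bar> powr p - \<bar>trunc_above ?k (f n) x\<bar> powr p))"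
        proof (rule integral_mono[OF i1])
          show "integrable I01 (\<lambda>x. r powr p * indicator A x + (\<bar>trunc_above r (f n) x\<bar> powr p - \<bar>trunc_above ?k (f n) x\<bar> powr p))"
            using int_ind[OF A(1)] ir ik by auto
          fix x
          have rk: "r \<le> ?k" using elim by simp
          consider "?k < \<bar>f n x\<bar>" | "r < \<bar>f n x\<bar>" "\<bar>f n x\<bar> \<le> ?k" | "\<bar>f n x\<bar> \<le> r" by linarith
          then show "indicator A x * \<bar>f n x - RR p U f n x\<bar> powr p \<le> r powr p * indicator A x + (\<bar>trunc_above r (f n) x\<bar> powr p - \<bar>trunc_above ?k (f n) x\<bar> powr p)"
          proof cases
            case 1 then show ?thesis using rk by (simp add: RR_def trunc_above_def indicator_def)
          next
            case 2 then show ?thesis using rk by (simp add: RR_def trunc_above_def indicator_def)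
          next
            case 3
            then have "\<bar>f n x\<bar> powr p \<le> r powr p" using p by (intro powr_mono2) auto
            then show ?thesis using 3 rk by (simp add: RR_def trunc_above_def indicator_def)
          qed
        qed
        also have "\<dots> = r powr p * measure I01 A + (aa p f n r - aa p f n ?k)"
        proof -
          have "A \<inter> space I01 = A" using sets.sets_into_space[OF A(1)] by auto
          then show ?thesis unfolding aa_def ip_def using int_ind[OF A(1)] ir ik by simp
        qed
        also have "\<dots> < r powr p * (e / (2 * r powr p)) + e/2"
          using elim A(2) rp by (intro add_less_le_mono mult_strict_left_mono) auto
        also have "\<dots> = e" using rp by simp
        finally show "integral\<^sup>L I01 (\<lambda>x. indicator A x * \<bar>f n x - RR p U f n x\<bar> powr p) < e" .
      qed
    qed
  qed
qed

end


lemma W: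
  assumes p: "p > 1" and U: "nonprincipal_ultrafilter U" and f: "Lp_bseq p f"
  shows "Lp_bseq p (RR p U f)"
    "((\<lambda>r. up_norm p U (\<lambda>n x. trunc_above r (f n) x - RR p U f n x)) \<longlongrightarrow> 0) at_top"
    "SS U (RR p U f)" "EI p U (\<lambda>n x. f n x - RR p U f n x)"
    "\<And>n. memLp p (RR p U f n)" "\<And>n. ip p (RR p U f n) \<le> ip p (f n)"
    "\<And>n. memLp p (\<lambda>x. f n x - RR p U f n x)"
proof -
  obtain M where M: "\<And>n. ip p (f n) \<le> M" using bseq_ip[OF f] p by auto
  show "Lp_bseq p (RR p U f)" by (rule R_bseq[OF p U f M])
  show "((\<lambda>r. up_norm p U (\<lambda>n x. trunc_above r (f n) x - RR p U f n x)) \<longlongrightarrow> 0) at_top"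
    by (rule R_conv[OF p U f M])
  show "SS U (RR p U f)" by (rule R_SS[OF p U f M])
  show "EI p U (\<lambda>n x. f n x - RR p U f n x)" by (rule S_EI[OF p U f M])
  show "\<And>n. memLp p (RR p U f n)" "\<And>n. ip p (RR p U f n) \<le> ip p (f n)" using R_mem[OF p U f M] by auto
  show "\<And>n. memLp p (\<lambda>x. f n x - RR p U f n x)" using S_mem[OF p U f M] by auto
qed

lemma zero:
  assumes p: "p > 0" and U: "nonprincipal_ultrafilter U" and m: "\<And>n. memLp p (X n)"
    and "EI p U X" "SS U X"
  shows "up_norm p U X = 0"
  by (rule up_zero[OF npu_nbot[OF U] p]) (rule EI_SS_zero[OF m assms(4,5) _ p])

theorem lemma2p3:
  fixes p :: real and U :: "nat filter"
  assumes "1 < p" and "nonprincipal_ultrafilter U"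
  shows "\<exists>R :: (nat \<Rightarrow> real \<Rightarrow> real) \<Rightarrow> (nat \<Rightarrow> real \<Rightarrow> real).
     (\<forall>f. Lp_bseq p f \<longrightarrow> Lp_bseq p (R f) \<and>
        ((\<lambda>r. up_norm p U (\<lambda>n x. trunc_above r (f n) x - R f n x)) \<longlongrightarrow> 0) at_top) \<and>
     (\<forall>f g. Lp_bseq p f \<longrightarrow> Lp_bseq p g \<longrightarrow> up_eq p U f g \<longrightarrow> up_eq p U (R f) (R g)) \<and>
     (\<forall>f g a b. Lp_bseq p f \<longrightarrow> Lp_bseq p g \<longrightarrow>
        up_eq p U (R (\<lambda>n x. a * f n x + b * g n x)) (\<lambda>n x. a * R f n x + b * R g n x)) \<and>
     (\<exists>C. \<forall>f. Lp_bseq p f \<longrightarrow> up_norm p U (R f) \<le> C * up_norm p U f) \<and>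
     (\<forall>f. Lp_bseq p f \<longrightarrow> up_eq p U (R (R f)) (R f))"
proof -
  note p = assms(1) and U = assms(2)
  have p0: "p > 0" using p by simp
  let ?R = "RR p U"
  have mem: "memLp p (f n)" if "Lp_bseq p f" for f n using that unfolding Lp_bseq_def by auto
  show ?thesis
  proof (intro exI[of _ ?R] conjI allI impI)
    fix f assume f: "Lp_bseq p f"
    show "Lp_bseq p (?R f)" by (rule W(1)[OF p U f])
    show "((\<lambda>r. up_norm p U (\<lambda>n x. trunc_above r (f n) x - ?R f n x)) \<longlongrightarrow> 0) at_top"
      by (rule W(2)[OF p U f])
  next
    fix f g assume f: "Lp_bseq p f" and g: "Lp_bseq p g" and eq: "up_eq p U f g"
    let ?X = "\<lambda>n x. ?R f n x - ?R g n x"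
    let ?Sf = "\<lambda>n x. f n x - ?R f n x"
    let ?Sg = "\<lambda>n x. g n x - ?R g n x"
    let ?D = "\<lambda>n x. f n x - g n x"
    have mD: "memLp p (?D n)" for n by (rule memLp_diff[OF p0 mem[OF f] mem[OF g]])
    have EID: "EI p U ?D" by (rule EI_null[OF mD up_null[OF U p0 f g eq]])
    have m1: "memLp p (\<lambda>x. 1 * ?D n x + (-1) * ?Sf n x)" for n
      by (rule memLp_lin[OF p0 mD W(7)[OF p U f]])
    have E1: "EI p U (\<lambda>n x. 1 * ?D n x + (-1) * ?Sf n x)"
      by (rule EI_lin[OF p0 mD W(7)[OF p U f] EID W(4)[OF p U f]])
    have E2: "EI p U (\<lambda>n x. 1 * (1 * ?D n x + (-1) * ?Sf n x) + 1 * ?Sg n x)"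
      by (rule EI_lin[OF p0 m1 W(7)[OF p U g] E1 W(4)[OF p U g]])
    have "(\<lambda>n x. 1 * (1 * ?D n x + (-1) * ?Sf n x) + 1 * ?Sg n x) = ?X" by (intro ext) simp
    with E2 have EX: "EI p U ?X" by simp
    have "SS U (\<lambda>n x. 1 * ?R f n x + (-1) * ?R g n x)" by (rule SS_lin[OF W(3)[OF p U f] W(3)[OF p U g]])
    then have SX: "SS U ?X" by simp
    have mX: "memLp p (?X n)" for n by (rule memLp_diff[OF p0 W(5)[OF p U f] W(5)[OF p U g]])
    show "up_eq p U (?R f) (?R g)" unfolding up_eq_def by (rule zero[OF p0 U mX EX SX])
  next
    fix f g a b assume f: "Lp_bseq p f" and g: "Lp_bseq p g"
    let ?h = "\<lambda>n x. a * f n x + b * g n x"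
    have h: "Lp_bseq p ?h" by (rule bseq_lin[OF p0 f g])
    let ?X = "\<lambda>n x. ?R ?h n x - (a * ?R f n x + b * ?R g n x)"
    let ?Sf = "\<lambda>n x. f n x - ?R f n x"
    let ?Sg = "\<lambda>n x. g n x - ?R g n x"
    let ?Sh = "\<lambda>n x. ?h n x - ?R ?h n x"
    have m1: "memLp p (\<lambda>x. a * ?Sf n x + b * ?Sg n x)" for n
      by (rule memLp_lin[OF p0 W(7)[OF p U f] W(7)[OF p U g]])
    have E1: "EI p U (\<lambda>n x. a * ?Sf n x + b * ?Sg n x)"
      by (rule EI_lin[OF p0 W(7)[OF p U f] W(7)[OF p U g] W(4)[OF p U f] W(4)[OF p U g]])
    have E2: "EI p U (\<lambda>n x. (-1) * ?Sh n x + 1 * (a * ?Sf n x + b * ?Sg n x))"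
      by (rule EI_lin[OF p0 W(7)[OF p U h] m1 W(4)[OF p U h] E1])
    have "(\<lambda>n x. (-1) * ?Sh n x + 1 * (a * ?Sf n x + b * ?Sg n x)) = ?X"
      by (intro ext) (simp add: algebra_simps)
    with E2 have EX: "EI p U ?X" by simp
    have S1: "SS U (\<lambda>n x. a * ?R f n x + b * ?R g n x)" by (rule SS_lin[OF W(3)[OF p U f] W(3)[OF p U g]])
    have "SS U (\<lambda>n x. 1 * ?R ?h n x + (-1) * (a * ?R f n x + b * ?R g n x))"
      by (rule SS_lin[OF W(3)[OF p U h] S1])
    moreover have "(\<lambda>n x. 1 * ?R ?h n x + (-1) * (a * ?R f n x + b * ?R g n x)) = ?X"
      by (intro ext) simp
    ultimately have SX: "SS U ?X" by simp
    have mX: "memLp p (?X n)" for n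
      by (rule memLp_diff[OF p0 W(5)[OF p U h] memLp_lin[OF p0 W(5)[OF p U f] W(5)[OF p U g]]])
    show "up_eq p U (?R ?h) (\<lambda>n x. a * ?R f n x + b * ?R g n x)"
      unfolding up_eq_def by (rule zero[OF p0 U mX EX SX])
  next
    show "\<exists>C. \<forall>f. Lp_bseq p f \<longrightarrow> up_norm p U (?R f) \<le> C * up_norm p U f"
    proof (intro exI[of _ 1] allI impI)
    fix f assume f: "Lp_bseq p f"
    show "up_norm p U (?R f) \<le> 1 * up_norm p U f"
    proof -
      have "up_norm p U (?R f) \<le> up_norm p U f"
      proof (rule up_mono[OF U W(1)[OF p U f] f])
        fix n show "Lp_norm p (?R f n) \<le> Lp_norm p (f n)"
          unfolding Lp_norm_ip by (rule powr_mono2) (use W(6)[OF p U f] ip_nonneg p0 in auto)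
      qed
      then show ?thesis by simp
    qed
    qed
  next
    fix f assume f: "Lp_bseq p f"
    have rf: "Lp_bseq p (?R f)" by (rule W(1)[OF p U f])
    let ?X = "\<lambda>n x. ?R (?R f) n x - ?R f n x"
    let ?S = "\<lambda>n x. ?R f n x - ?R (?R f) n x"
    have E2: "EI p U (\<lambda>n x. (-1) * ?S n x + 0 * ?S n x)"
      by (rule EI_lin[OF p0 W(7)[OF p U rf] W(7)[OF p U rf] W(4)[OF p U rf] W(4)[OF p U rf]])
    then have EX: "EI p U ?X" by simp
    have "SS U (\<lambda>n x. 1 * ?R (?R f) n x + (-1) * ?R f n x)" by (rule SS_lin[OF W(3)[OF p U rf] W(3)[OF p U f]])
    then have SX: "SS U ?X" by simp
    have mX: "memLp p (?X n)" for n by (rule memLp_diff[OF p0 W(5)[OF p U rf] W(5)[OF p U f]])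
    show "up_eq p U (?R (?R f)) (?R f)" unfolding up_eq_def by (rule zero[OF p0 U mX EX SX])
  qed
qed

end
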